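(* Let $G$ be a graph and $v\in V(G)$. Let $G^-$ be obtained from $G$ by adding a vertex $v^-$ with $N_{G^-}(v^-)=N_G(v)$, and $G^+$ be obtained by adding a vertex $v^+$ with $N_{G^+}(v^+)=N_G[v]$ (closed neighborhood). Let $\star\in\{+,-\}$, and if $\star=+$ assume $v$ is not an isolated vertex. Then $\mathcal{Z}^{\mathrm{TE}}_{\star}(G^{\star})\cong(\mathcal{Z}^{\mathrm{TE}}_{\star}(G)\,\square\,P_2)/\!\sim$, $\mathcal{Z}^{\mathrm{TS}}_+(G^+)\cong(\mathcal{Z}^{\mathrm{TS}}_+(G)\,\square\,P_2)/\!\sim$, and $\mathcal{Z}^{\mathrm{TS}}_-(G^-)\cong(2\mathcal{Z}^{\mathrm{TS}}_-(G))/\!\sim$, where $V(P_2)=\{v,v^\star\}$, the vertices of the two copies in $2\mathcal{Z}^{\mathrm{TS}}_-(G)$ are written $(B,v)$ and $(B,v^-)$ for $B$ a vertex of $\mathcal{Z}^{\mathrm{TS}}_-(G)$, and in each case $\sim$ is the equivalence relation identifying $(B,v)$ with $(B,v^{\star})$ if and only if $v\in B$.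
   Context: $\square$ denotes the Cartesian product and $2H$ the disjoint union of two copies of $H$. For an equivalence relation $\sim$ on $V(H)$, the quotient graph $H/\!\sim$ has the equivalence classes as vertices, with two distinct classes adjacent iff some member of one is adjacent in $H$ to some member of the other. PSD forcing ($\star=+$): if $B$ is the current blue set, $C$ a component of $G-B$, and $u$ a blue vertex with $N_G(u)\cap V(C)=\{w\}$, then $u$ may force $w$ blue. Skew forcing ($\star=-$): any vertex $u$ (blue or white) with exactly one white neighbor $w$ may force $w$ blue. A $\mathrm{Z}_\star$-forcing set is a (possibly empty) set of initially blue vertices from which repeated forcing turns all vertices blue; $\mathrm{Z}_\star(G)$ is the minimum size. $\mathcal{Z}^{\mathrm{TE}}_\star(G)$ has as vertices the minimum $\mathrm{Z}_\star$-forcing sets of $G$, with $S_1S_2$ an edge iff $S_1\setminus S_2=\{v_1\}$ and $S_2\setminus S_1=\{v_2\}$ for some vertices $v_1,v_2$; $\mathcal{Z}^{\mathrm{TS}}_\star(G)$ has the same vertices with the additional requirement $v_1v_2\in E(G)$. *)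

theory Defs
  imports Main
begin

record 'a graph =
  verts :: "'a set"
  adj :: "'a \<Rightarrow> 'a \<Rightarrow> bool"

definition simple_graph :: "'a graph \<Rightarrow> bool" where
  "simple_graph G \<longleftrightarrow> finite (verts G) \<and>
     (\<forall>x y. adj G x y \<longrightarrow> x \<in> verts G \<and> y \<in> verts G \<and> x \<noteq> y \<and> adj G y x)"

definition nbhd :: "'a graph \<Rightarrow> 'a \<Rightarrow> 'a set" where
  "nbhd G u = {w. adj G u w}"

definition isolated :: "'a graph \<Rightarrow> 'a \<Rightarrow> bool" where
  "isolated G v \<longleftrightarrow> nbhd G v = {}"

definition graph_iso :: "'a graph \<Rightarrow> 'b graph \<Rightarrow> bool" (infix "\<cong>\<^sub>g" 50) where
  "G \<cong>\<^sub>g H \<longleftrightarrow> (\<exists>f. bij_betw f (verts G) (verts H) \<and>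
      (\<forall>x\<in>verts G. \<forall>y\<in>verts G. adj G x y \<longleftrightarrow> adj H (f x) (f y)))"

definition add_twin_minus :: "'a graph \<Rightarrow> 'a \<Rightarrow> 'a \<Rightarrow> 'a graph" where
  "add_twin_minus G v x = \<lparr> verts = insert x (verts G),
     adj = (\<lambda>a b. adj G a b \<or> (a = x \<and> adj G v b) \<or> (b = x \<and> adj G v a)) \<rparr>"

definition add_twin_plus :: "'a graph \<Rightarrow> 'a \<Rightarrow> 'a \<Rightarrow> 'a graph" where
  "add_twin_plus G v x = \<lparr> verts = insert x (verts G),
     adj = (\<lambda>a b. adj G a b \<or> (a = x \<and> (adj G v b \<or> b = v)) \<or> (b = x \<and> (adj G v a \<or> a = v))) \<rparr>"

text \<open>Forcing rules: PSD (Plus) and skew (Minus).\<close>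

datatype sign = Plus | Minus

definition comp_minus :: "'a graph \<Rightarrow> 'a set \<Rightarrow> 'a \<Rightarrow> 'a set" where
  "comp_minus G B w = {y. (\<lambda>a b. adj G a b \<and> a \<notin> B \<and> b \<notin> B)\<^sup>*\<^sup>* w y}"

definition force_step :: "sign \<Rightarrow> 'a graph \<Rightarrow> 'a set \<Rightarrow> 'a \<Rightarrow> bool" where
  "force_step s G B w \<longleftrightarrow> w \<in> verts G \<and> w \<notin> B \<and>
     (\<exists>u \<in> verts G. case s of
        Plus \<Rightarrow> u \<in> B \<and> nbhd G u \<inter> comp_minus G B w = {w}
      | Minus \<Rightarrow> {y. adj G u y \<and> y \<notin> B} = {w})"

inductive reachable_blue :: "sign \<Rightarrow> 'a graph \<Rightarrow> 'a set \<Rightarrow> 'a set \<Rightarrow> bool"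
  for s G S where
  start: "reachable_blue s G S S"
| step: "reachable_blue s G S B \<Longrightarrow> force_step s G B w \<Longrightarrow> reachable_blue s G S (insert w B)"

definition forcing_set :: "sign \<Rightarrow> 'a graph \<Rightarrow> 'a set \<Rightarrow> bool" where
  "forcing_set s G S \<longleftrightarrow> S \<subseteq> verts G \<and> reachable_blue s G S (verts G)"

definition zf_number :: "sign \<Rightarrow> 'a graph \<Rightarrow> nat" where
  "zf_number s G = (LEAST k. \<exists>S. forcing_set s G S \<and> card S = k)"

definition min_forcing_sets :: "sign \<Rightarrow> 'a graph \<Rightarrow> 'a set set" where
  "min_forcing_sets s G = {S. forcing_set s G S \<and> card S = zf_number s G}"

definition ZTE :: "sign \<Rightarrow> 'a graph \<Rightarrow> 'a set graph" where
  "ZTE s G = \<lparr> verts = min_forcing_sets s G,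
     adj = (\<lambda>S1 S2. S1 \<in> min_forcing_sets s G \<and> S2 \<in> min_forcing_sets s G \<and>
        (\<exists>v1 v2. S1 - S2 = {v1} \<and> S2 - S1 = {v2})) \<rparr>"

definition ZTS :: "sign \<Rightarrow> 'a graph \<Rightarrow> 'a set graph" where
  "ZTS s G = \<lparr> verts = min_forcing_sets s G,
     adj = (\<lambda>S1 S2. S1 \<in> min_forcing_sets s G \<and> S2 \<in> min_forcing_sets s G \<and>
        (\<exists>v1 v2. S1 - S2 = {v1} \<and> S2 - S1 = {v2} \<and> adj G v1 v2)) \<rparr>"

definition cart_prod :: "'a graph \<Rightarrow> 'b graph \<Rightarrow> ('a \<times> 'b) graph" where
  "cart_prod H K = \<lparr> verts = verts H \<times> verts K,
     adj = (\<lambda>(x1, y1) (x2, y2). x1 \<in> verts H \<and> x2 \<in> verts H \<and> y1 \<in> verts K \<and> y2 \<in> verts K \<and>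
        ((x1 = x2 \<and> adj K y1 y2) \<or> (y1 = y2 \<and> adj H x1 x2))) \<rparr>"

definition P2 :: "'a \<Rightarrow> 'a \<Rightarrow> 'a graph" where
  "P2 a b = \<lparr> verts = {a, b}, adj = (\<lambda>x y. x \<noteq> y \<and> {x, y} = {a, b}) \<rparr>"

definition two_copies :: "'a graph \<Rightarrow> 'b \<Rightarrow> 'b \<Rightarrow> ('a \<times> 'b) graph" where
  "two_copies H a b = \<lparr> verts = verts H \<times> {a, b},
     adj = (\<lambda>(x1, i) (x2, j). i \<in> {a, b} \<and> i = j \<and> adj H x1 x2) \<rparr>"

definition quotient_graph :: "'a graph \<Rightarrow> ('a \<times> 'a) set \<Rightarrow> 'a set graph" where
  "quotient_graph H R = \<lparr> verts = verts H // R,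
     adj = (\<lambda>X Y. X \<in> verts H // R \<and> Y \<in> verts H // R \<and> X \<noteq> Y \<and>
        (\<exists>x\<in>X. \<exists>y\<in>Y. adj H x y)) \<rparr>"

definition ident_rel :: "('b set \<times> 'b) set \<Rightarrow> 'b \<Rightarrow> ('b set \<times> 'b) rel" where
  "ident_rel W v = {(p, q). p \<in> W \<and> q \<in> W \<and> (p = q \<or> (fst p = fst q \<and> v \<in> fst p))}"

end

theory Submission
  imports Defs
begin

lemma rt_relabel:
  assumes "\<And>a b. RH (h a) (h b) = RK a b"
  shows "RK\<^sup>*\<^sup>* w y \<Longrightarrow> RH\<^sup>*\<^sup>* (h w) (h y)"
proof (induction rule: rtranclp_induct)
  case base then show ?case by simp
next
  case (step y z) then show ?case using assms
    by (metis rtranclp.rtrancl_into_rtrancl)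
qed

lemma comp_relabel:
  assumes inv: "\<And>a. h (h a) = a" and ad: "\<And>a b. adj H (h a) (h b) = adj K a b"
  shows "comp_minus H (h ` B) (h w) = h ` comp_minus K B w"
proof -
  have injh: "inj h" by (metis inv injI)
  have mem: "\<And>a. (h a \<in> h ` B) = (a \<in> B)" using injh by (simp add: inj_image_mem_iff)
  have ad2: "\<And>a b. adj K (h a) (h b) = adj H a b" by (metis ad inv)
  have mem2: "\<And>a. (h a \<in> B) = (a \<in> h ` B)" by (metis mem inv)
  have r1: "\<And>a b. (\<lambda>a b. adj H a b \<and> a \<notin> h ` B \<and> b \<notin> h ` B) (h a) (h b) =
     (\<lambda>a b. adj K a b \<and> a \<notin> B \<and> b \<notin> B) a b" using ad mem by simp
  have r2: "\<And>a b. (\<lambda>a b. adj K a b \<and> a \<notin> B \<and> b \<notin> B) (h a) (h b) =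
     (\<lambda>a b. adj H a b \<and> a \<notin> h ` B \<and> b \<notin> h ` B) a b" using ad2 mem2 by simp
  show ?thesis
  proof
    show "comp_minus H (h ` B) (h w) \<subseteq> h ` comp_minus K B w"
    proof
      fix z assume "z \<in> comp_minus H (h ` B) (h w)"
      then have "(\<lambda>a b. adj H a b \<and> a \<notin> h ` B \<and> b \<notin> h ` B)\<^sup>*\<^sup>* (h w) z"
        by (simp add: comp_minus_def)
      from rt_relabel[of _ h, OF r2 this] have "(\<lambda>a b. adj K a b \<and> a \<notin> B \<and> b \<notin> B)\<^sup>*\<^sup>* w (h z)"
        by (simp add: inv)
      then have "h z \<in> comp_minus K B w" by (simp add: comp_minus_def)
      then show "z \<in> h ` comp_minus K B w" by (metis inv image_eqI)
    qed
  next
    show "h ` comp_minus K B w \<subseteq> comp_minus H (h ` B) (h w)"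
    proof
      fix z assume "z \<in> h ` comp_minus K B w"
      then obtain y where z: "z = h y" and "y \<in> comp_minus K B w" by auto
      then have "(\<lambda>a b. adj K a b \<and> a \<notin> B \<and> b \<notin> B)\<^sup>*\<^sup>* w y"
        by (simp add: comp_minus_def)
      from rt_relabel[of _ h, OF r1 this] show "z \<in> comp_minus H (h ` B) (h w)"
        by (simp add: comp_minus_def z)
    qed
  qed
qed

lemma force_relabel:
  assumes inv: "\<And>a. h (h a) = a" and ad: "\<And>a b. adj H (h a) (h b) = adj K a b"
    and vs: "verts H = h ` verts K"
    and f: "force_step s K B w"
  shows "force_step s H (h ` B) (h w)"
proof -
  have injh: "inj h" by (metis inv injI)
  have mem: "\<And>a A. (h a \<in> h ` A) = (a \<in> A)" using injh by (simp add: inj_image_mem_iff)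
  have nb: "\<And>u. nbhd H (h u) = h ` nbhd K u"
  proof -
    fix u show "nbhd H (h u) = h ` nbhd K u"
      unfolding nbhd_def using ad inv by (auto, metis image_eqI mem_Collect_eq)
  qed
  from f obtain u where w: "w \<in> verts K" "w \<notin> B" and u: "u \<in> verts K" and
    c: "case s of Plus \<Rightarrow> u \<in> B \<and> nbhd K u \<inter> comp_minus K B w = {w}
      | Minus \<Rightarrow> {y. adj K u y \<and> y \<notin> B} = {w}"
    unfolding force_step_def by blast
  have "case s of Plus \<Rightarrow> h u \<in> h ` B \<and> nbhd H (h u) \<inter> comp_minus H (h ` B) (h w) = {h w}
      | Minus \<Rightarrow> {y. adj H (h u) y \<and> y \<notin> h ` B} = {h w}"
  proof (cases s)
    case Plus
    then have "u \<in> B" "nbhd K u \<inter> comp_minus K B w = {w}" using c by auto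
    then show ?thesis using Plus
      by (simp add: nb comp_relabel[OF inv ad] image_Int[OF injh, symmetric])
  next
    case Minus
    then have e: "{y. adj K u y \<and> y \<notin> B} = {w}" using c by auto
    have "{y. adj H (h u) y \<and> y \<notin> h ` B} = h ` {y. adj K u y \<and> y \<notin> B}"
      using ad inv mem by (auto simp: inj_eq[OF injh], metis image_eqI mem_Collect_eq)
    then show ?thesis using Minus e by simp
  qed
  then show ?thesis unfolding force_step_def using w u vs mem by auto
qed

lemma reach_relabel:
  assumes inv: "\<And>a. h (h a) = a" and ad: "\<And>a b. adj H (h a) (h b) = adj K a b"
    and vs: "verts H = h ` verts K"
  shows "reachable_blue s K S B \<Longrightarrow> reachable_blue s H (h ` S) (h ` B)"
proof (induction rule: reachable_blue.induct)
  case start then show ?case by (rule reachable_blue.start)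
next
  case (step B w)
  then show ?case using force_relabel[OF inv ad vs step(2)]
    by (metis image_insert reachable_blue.step)
qed

definition sw :: "'a \<Rightarrow> 'a \<Rightarrow> 'a \<Rightarrow> 'a" where
  "sw v x a = (if a = v then x else if a = x then v else a)"

definition twin :: "sign \<Rightarrow> 'a graph \<Rightarrow> 'a \<Rightarrow> 'a \<Rightarrow> 'a graph" where
  "twin s G v x = (case s of Plus \<Rightarrow> add_twin_plus G v x | Minus \<Rightarrow> add_twin_minus G v x)"

locale tw =
  fixes G :: "'a graph" and v x :: 'a
  assumes sg: "simple_graph G" and vG: "v \<in> verts G" and xG: "x \<notin> verts G"
begin

lemma adjG: "adj G a b \<Longrightarrow> a \<in> verts G \<and> b \<in> verts G \<and> a \<noteq> b \<and> adj G b a"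
  using sg unfolding simple_graph_def by blast

lemma finG: "finite (verts G)" using sg unfolding simple_graph_def by blast

lemma vx: "v \<noteq> x" using vG xG by auto

lemma nadj_x: "\<not> adj G a x" "\<not> adj G x a" using adjG xG by blast+

lemma verts_Gs: "verts (twin s G v x) = insert x (verts G)"
  by (cases s) (auto simp: twin_def add_twin_plus_def add_twin_minus_def)

lemma adj_Gs_nx: "a \<noteq> x \<Longrightarrow> b \<noteq> x \<Longrightarrow> adj (twin s G v x) a b = adj G a b"
  by (cases s) (auto simp: twin_def add_twin_plus_def add_twin_minus_def)

lemma adj_Gs_x1: "adj (twin s G v x) x b = (adj G v b \<or> (s = Plus \<and> b = v))"
  using adjG xG by (cases s) (auto simp: twin_def add_twin_plus_def add_twin_minus_def)

lemma adj_Gs_sym: "adj (twin s G v x) a b = adj (twin s G v x) b a"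
  using adjG by (cases s) (auto simp: twin_def add_twin_plus_def add_twin_minus_def)

lemma adj_Gs_x2: "adj (twin s G v x) a x = (adj G v a \<or> (s = Plus \<and> a = v))"
  using adj_Gs_sym adj_Gs_x1 by metis

lemma adj_Gs_verts: "adj (twin s G v x) a b \<Longrightarrow> a \<in> insert x (verts G) \<and> b \<in> insert x (verts G)"
  using adjG vG by (cases s) (auto simp: twin_def add_twin_plus_def add_twin_minus_def)

lemma adj_Gs_v: "a \<noteq> x \<Longrightarrow> a \<noteq> v \<Longrightarrow> adj (twin s G v x) a v = adj (twin s G v x) a x"
  using adjG adj_Gs_nx adj_Gs_x2 vx by metis

lemma sw_sw: "sw v x (sw v x a) = a"
  unfolding sw_def by auto

lemma adj_Gs_sw: "adj (twin s G v x) (sw v x a) (sw v x b) = adj (twin s G v x) a b"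
  by (cases "a = v"; cases "a = x"; cases "b = v"; cases "b = x")
    (auto simp: sw_def adj_Gs_nx adj_Gs_x1 adj_Gs_x2 vx nadj_x vx[symmetric] dest: adjG)

lemma verts_sw: "verts (twin s G v x) = sw v x ` verts (twin s G v x)"
proof -
  have 1: "sw v x ` insert x (verts G) \<subseteq> insert x (verts G)" using vG by (auto simp: sw_def)
  have "insert x (verts G) \<subseteq> sw v x ` insert x (verts G)"
  proof
    fix a assume "a \<in> insert x (verts G)"
    then have "sw v x a \<in> insert x (verts G)" using 1 by blast
    then show "a \<in> sw v x ` insert x (verts G)" by (metis sw_sw image_eqI)
  qed
  then show ?thesis using 1 verts_Gs by auto
qed

lemma forcing_sw: "forcing_set s (twin s G v x) S \<Longrightarrow> forcing_set s (twin s G v x) (sw v x ` S)"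
  unfolding forcing_set_def
  using reach_relabel[of "sw v x" "twin s G v x" "twin s G v x", OF sw_sw adj_Gs_sw verts_sw]
  by (metis image_mono verts_sw)

end

lemma comp_notin: assumes "y \<in> comp_minus H B w" "w \<notin> B" shows "y \<notin> B"
proof -
  have "(\<lambda>a b. adj H a b \<and> a \<notin> B \<and> b \<notin> B)\<^sup>*\<^sup>* w y" using assms by (simp add: comp_minus_def)
  then show ?thesis using assms(2) by (induction rule: rtranclp_induct) auto
qed

lemma comp_self: "w \<in> comp_minus H B w"
  unfolding comp_minus_def by simp

lemma comp_step: "y \<in> comp_minus H B w \<Longrightarrow> adj H y z \<Longrightarrow> y \<notin> B \<Longrightarrow> z \<notin> B \<Longrightarrow> z \<in> comp_minus H B w"
  unfolding comp_minus_def by (simp add: rtranclp.rtrancl_into_rtrancl)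

lemma comp_single: "(\<And>b. adj H w b \<Longrightarrow> b \<in> B) \<Longrightarrow> comp_minus H B w \<subseteq> {w}"
  unfolding comp_minus_def
  by (auto elim: converse_rtranclpE)

context tw begin

lemma nadj_refl: "\<not> adj G a a" using adjG by blast

lemma adj_G_Gs: "adj G a b \<Longrightarrow> adj (twin s G v x) a b"
  using adjG xG adj_Gs_nx by metis

lemma adj_Gs_G: "adj (twin s G v x) a b \<Longrightarrow> a \<noteq> x \<Longrightarrow> b \<noteq> x \<Longrightarrow> adj G a b"
  using adj_Gs_nx by metis

lemma comp_Gs: "x \<in> B \<Longrightarrow> comp_minus (twin s G v x) B w = comp_minus G (B - {x}) w"
proof -
  assume xB: "x \<in> B"
  have "(\<lambda>a b. adj (twin s G v x) a b \<and> a \<notin> B \<and> b \<notin> B) = (\<lambda>a b. adj G a b \<and> a \<notin> B - {x} \<and> b \<notin> B - {x})"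
  proof (intro ext)
    fix a b show "(adj (twin s G v x) a b \<and> a \<notin> B \<and> b \<notin> B) = (adj G a b \<and> a \<notin> B - {x} \<and> b \<notin> B - {x})"
      using xB by (cases "a = x \<or> b = x") (auto simp: adj_Gs_nx nadj_x)
  qed
  then show ?thesis unfolding comp_minus_def by simp
qed

lemma comp_G_del: "comp_minus G (B - {x}) w = comp_minus G B w"
proof -
  have "(\<lambda>a b. adj G a b \<and> a \<notin> B - {x} \<and> b \<notin> B - {x}) = (\<lambda>a b. adj G a b \<and> a \<notin> B \<and> b \<notin> B)"
  proof (intro ext)
    fix a b show "(adj G a b \<and> a \<notin> B - {x} \<and> b \<notin> B - {x}) = (adj G a b \<and> a \<notin> B \<and> b \<notin> B)"
      by (cases "a = x \<or> b = x") (auto simp: nadj_x)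
  qed
  then show ?thesis unfolding comp_minus_def by simp
qed

lemma nbhd_Gs: "u \<noteq> x \<Longrightarrow> nbhd (twin s G v x) u - {x} = nbhd G u"
  unfolding nbhd_def using nadj_x by (auto intro: adj_G_Gs dest: adj_Gs_G)

lemma force_del_x:
  assumes iso: "s = Plus \<longrightarrow> \<not> isolated G v" and xB: "x \<in> B"
    and f: "force_step s (twin s G v x) B w"
  shows "force_step s G (B - {x}) w"
proof -
  from f obtain u where w: "w \<in> insert x (verts G)" "w \<notin> B" and u: "u \<in> insert x (verts G)" and
    c: "case s of Plus \<Rightarrow> u \<in> B \<and> nbhd (twin s G v x) u \<inter> comp_minus (twin s G v x) B w = {w}
      | Minus \<Rightarrow> {y. adj (twin s G v x) u y \<and> y \<notin> B} = {w}"
    unfolding force_step_def verts_Gs by blast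
  have wx: "w \<noteq> x" using w xB by auto
  have wG: "w \<in> verts G" "w \<notin> B - {x}" using w wx by auto
  show ?thesis
  proof (cases s)
    case Minus
    then have e: "{y. adj (twin s G v x) u y \<and> y \<notin> B} = {w}" using c by auto
    show ?thesis
    proof (cases "u = x")
      case True
      have "{y. adj G v y \<and> y \<notin> B - {x}} = {y. adj (twin s G v x) u y \<and> y \<notin> B}"
        using True Minus xB by (auto simp: adj_Gs_x1 nadj_x)
      then show ?thesis unfolding force_step_def using Minus e wG vG by auto
    next
      case False
      have "{y. adj G u y \<and> y \<notin> B - {x}} = {y. adj (twin s G v x) u y \<and> y \<notin> B}"
        using False Minus xB by (auto intro: adj_G_Gs dest: adj_Gs_G simp: nadj_x)
      then show ?thesis unfolding force_step_def using Minus e wG u False by auto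
    qed
  next
    case Plus
    have uB: "u \<in> B" and e: "nbhd (twin s G v x) u \<inter> comp_minus G (B - {x}) w = {w}"
      using c Plus comp_Gs[OF xB] by auto
    let ?C = "comp_minus G (B - {x}) w"
    have xC: "x \<notin> ?C" using comp_notin[of x G B w] comp_G_del[of B w] xB w(2) by auto
    show ?thesis
    proof (cases "u = x")
      case False
      have "nbhd G u \<inter> ?C = {w}" using e nbhd_Gs[OF False, of s] xC by blast
      then show ?thesis unfolding force_step_def using Plus wG u False uB by auto
    next
      case True
      have nx: "nbhd (twin s G v x) x = insert v (nbhd G v)"
        unfolding nbhd_def using Plus by (auto simp: adj_Gs_x1)
      show ?thesis
      proof (cases "v \<in> B")
        case True
        have "v \<notin> ?C" using comp_notin[of v G B w] comp_G_del[of B w] True w(2) by auto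
        then have "nbhd G v \<inter> ?C = {w}" using e nx \<open>u = x\<close> by auto
        then show ?thesis unfolding force_step_def using Plus wG vG True vx by auto
      next
        case False
        have wn: "w \<in> insert v (nbhd G v)" using e nx \<open>u = x\<close> by auto
        have vC: "v \<in> ?C"
        proof (cases "w = v")
          case True then show ?thesis using comp_self by metis
        next
          case False
          then have "adj G w v" using wn adjG unfolding nbhd_def by auto
          then show ?thesis using comp_step[OF comp_self, of G w v "B - {x}"] wG \<open>v \<notin> B\<close> by auto
        qed
        then have wv: "w = v" using e nx \<open>u = x\<close> by auto
        have nvC: "nbhd G v \<inter> ?C = {}" 
        proof -
          have "nbhd G v \<inter> ?C \<subseteq> {v}" using e nx \<open>u = x\<close> wv by auto
          moreover have "v \<notin> nbhd G v" using nadj_refl unfolding nbhd_def by auto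
          ultimately show ?thesis by blast
        qed
        from iso Plus obtain u' where u': "adj G v u'" unfolding isolated_def nbhd_def by auto
        have u'B: "u' \<in> B - {x}"
        proof (rule ccontr)
          assume "u' \<notin> B - {x}"
          then have "u' \<in> ?C" using comp_step[OF comp_self, of G v u' "B - {x}"] u' wv wG by auto
          then show False using nvC u' unfolding nbhd_def by auto
        qed
        have "?C \<subseteq> {v}"
        proof -
          have "\<And>b. adj G v b \<Longrightarrow> b \<in> B - {x}"
          proof (rule ccontr)
            fix b assume "adj G v b" "b \<notin> B - {x}"
            then have "b \<in> ?C" using comp_step[OF comp_self, of G v b "B - {x}"] wv wG by auto
            then show False using nvC \<open>adj G v b\<close> unfolding nbhd_def by auto
          qed
          then show ?thesis using comp_single[of G v "B - {x}"] wv by auto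
        qed
        then have "nbhd G u' \<inter> ?C = {w}" using u' adjG wv comp_self[of w G "B - {x}"]
          unfolding nbhd_def by auto
        then show ?thesis unfolding force_step_def using Plus wG u'B adjG[OF u'] by auto
      qed
    qed
  qed
qed

lemma reach_del_x:
  assumes iso: "s = Plus \<longrightarrow> \<not> isolated G v"
  shows "reachable_blue s (twin s G v x) S B \<Longrightarrow> x \<in> S \<Longrightarrow> reachable_blue s G (S - {x}) (B - {x}) \<and> x \<in> B"
proof (induction rule: reachable_blue.induct)
  case start then show ?case by (simp add: reachable_blue.start)
next
  case (step B w)
  then have "force_step s G (B - {x}) w" using force_del_x[OF iso] by blast
  moreover have "w \<noteq> x" using step unfolding force_step_def by auto
  ultimately show ?case using step by (metis insert_Diff_if insertCI reachable_blue.step singletonD)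
qed

lemma force_add_x:
  assumes f: "force_step s G B w"
  shows "force_step s (twin s G v x) (insert x B) w"
proof -
  from f obtain u where w: "w \<in> verts G" "w \<notin> B" and u: "u \<in> verts G" and
    c: "case s of Plus \<Rightarrow> u \<in> B \<and> nbhd G u \<inter> comp_minus G B w = {w}
      | Minus \<Rightarrow> {y. adj G u y \<and> y \<notin> B} = {w}"
    unfolding force_step_def by blast
  have ux: "u \<noteq> x" "w \<noteq> x" using u w xG by auto
  show ?thesis
  proof (cases s)
    case Minus
    have "{y. adj (twin s G v x) u y \<and> y \<notin> insert x B} = {y. adj G u y \<and> y \<notin> B}"
      using ux by (auto intro: adj_G_Gs dest: adj_Gs_G simp: nadj_x)
    then show ?thesis unfolding force_step_def using Minus c w u ux verts_Gs by auto
  next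
    case Plus
    have cc: "comp_minus (twin s G v x) (insert x B) w = comp_minus G B w"
      using comp_Gs[of "insert x B" s w] comp_G_del[of "insert x B" w] comp_G_del[of B w]
      by (metis Diff_insert_absorb insertI1 insert_Diff_single insert_absorb)
    have xC: "x \<notin> comp_minus G B w"
      using comp_notin[of x "twin s G v x" "insert x B" w] cc w ux by auto
    have "nbhd (twin s G v x) u \<inter> comp_minus G B w = nbhd G u \<inter> comp_minus G B w"
      using nbhd_Gs[OF ux(1), of s] xC by blast
    then show ?thesis unfolding force_step_def using Plus c w u ux verts_Gs cc by auto
  qed
qed

lemma reach_add_x:
  "reachable_blue s G S B \<Longrightarrow> reachable_blue s (twin s G v x) (insert x S) (insert x B)"
proof (induction rule: reachable_blue.induct)
  case start then show ?case by (simp add: reachable_blue.start)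
next
  case (step B w)
  then show ?case using force_add_x
    by (metis insert_commute reachable_blue.step)
qed

lemma reach_meet:
  "reachable_blue s (twin s G v x) S B \<Longrightarrow> v \<notin> S \<Longrightarrow> x \<notin> S \<Longrightarrow> v \<notin> B \<and> x \<notin> B"
proof (induction rule: reachable_blue.induct)
  case start then show ?case by simp
next
  case (step B w)
  then have vB: "v \<notin> B" "x \<notin> B" by auto
  from step(2) obtain u where w: "w \<notin> B" and u: "u \<in> insert x (verts G)" and
    c: "case s of Plus \<Rightarrow> u \<in> B \<and> nbhd (twin s G v x) u \<inter> comp_minus (twin s G v x) B w = {w}
      | Minus \<Rightarrow> {y. adj (twin s G v x) u y \<and> y \<notin> B} = {w}"
    unfolding force_step_def verts_Gs by blast
  have "w \<noteq> v \<and> w \<noteq> x"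
  proof (rule ccontr)
    assume "\<not> (w \<noteq> v \<and> w \<noteq> x)"
    then obtain t where wt: "{w, t} = {v, x}" "t \<noteq> w" using vx by blast
    show False
    proof (cases s)
      case Minus
      then have e: "{y. adj (twin s G v x) u y \<and> y \<notin> B} = {w}" using c by auto
      then have uw: "adj (twin s G v x) u w" by auto
      have uvx: "u \<noteq> v" "u \<noteq> x"
        using uw wt Minus adjG by (auto simp: adj_Gs_x1 adj_Gs_x2 adj_Gs_nx nadj_x nadj_refl doubleton_eq_iff)
      have "adj (twin s G v x) u t" using uw wt adj_Gs_v[OF uvx(2) uvx(1)]
        by (auto simp: doubleton_eq_iff)
      moreover have "t \<notin> B" using wt vB by (auto simp: doubleton_eq_iff)
      ultimately have "t \<in> {w}" using e by blast
      then show False using wt by auto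
    next
      case Plus
      then have uB: "u \<in> B" and e: "nbhd (twin s G v x) u \<inter> comp_minus (twin s G v x) B w = {w}"
        using c by auto
      then have uw: "adj (twin s G v x) u w" unfolding nbhd_def by auto
      have uvx: "u \<noteq> v" "u \<noteq> x" using uB vB by auto
      have ut: "adj (twin s G v x) u t" using uw wt adj_Gs_v[OF uvx(2) uvx(1)]
        by (auto simp: doubleton_eq_iff)
      have wta: "adj (twin s G v x) w t" using wt Plus adj_Gs_x1 adj_Gs_x2
        by (auto simp: doubleton_eq_iff)
      have "t \<notin> B" using wt vB by (auto simp: doubleton_eq_iff)
      then have "t \<in> comp_minus (twin s G v x) B w" using comp_step[OF comp_self wta] w by auto
      then have "t \<in> {w}" using e ut unfolding nbhd_def by blast
      then show False using wt by auto
    qed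
  qed
  then show ?case using vB by auto
qed

end

lemma quot_iso:
  assumes eq: "equiv W R" and vK: "verts K = W"
    and phi_into: "\<phi> ` W = verts H"
    and phi_eq: "\<And>p q. p \<in> W \<Longrightarrow> q \<in> W \<Longrightarrow> (\<phi> p = \<phi> q) = ((p, q) \<in> R)"
    and phi_adj: "\<And>p q. p \<in> W \<Longrightarrow> q \<in> W \<Longrightarrow> adj H (\<phi> p) (\<phi> q) =
        (\<phi> p \<noteq> \<phi> q \<and> (\<exists>p' q'. (p, p') \<in> R \<and> (q, q') \<in> R \<and> adj K p' q'))"
  shows "H \<cong>\<^sub>g quotient_graph K R"
proof -
  define r where "r T = (SOME p. p \<in> W \<and> \<phi> p = T)" for T
  have r: "r T \<in> W \<and> \<phi> (r T) = T" if "T \<in> verts H" for T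
  proof -
    have "\<exists>p. p \<in> W \<and> \<phi> p = T" using that phi_into by (metis imageE)
    then show ?thesis unfolding r_def by (rule someI_ex)
  qed
  define f where "f T = R `` {r T}" for T
  have finj: "(f T1 = f T2) = (T1 = T2)" if "T1 \<in> verts H" "T2 \<in> verts H" for T1 T2
  proof
    assume "f T1 = f T2"
    then have "(r T1, r T2) \<in> R" unfolding f_def using eq_equiv_class_iff[OF eq] r that by blast
    then show "T1 = T2" using phi_eq r that by metis
  qed simp
  have bij: "bij_betw f (verts H) (verts (quotient_graph K R))"
  proof (rule bij_betw_imageI)
    show "inj_on f (verts H)" using finj by (meson inj_onI)
    show "f ` verts H = verts (quotient_graph K R)"
    proof
      show "f ` verts H \<subseteq> verts (quotient_graph K R)"
        unfolding quotient_graph_def f_def vK using r by (auto intro: quotientI)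
    next
      show "verts (quotient_graph K R) \<subseteq> f ` verts H"
      proof
        fix X assume "X \<in> verts (quotient_graph K R)"
        then obtain p where p: "p \<in> W" "X = R `` {p}" unfolding quotient_graph_def vK
          by (auto elim: quotientE)
        have T: "\<phi> p \<in> verts H" using p phi_into by auto
        then have "(r (\<phi> p), p) \<in> R" using phi_eq r p by metis
        then have "f (\<phi> p) = X" unfolding f_def p(2) using equiv_class_eq[OF eq] by blast
        then show "X \<in> f ` verts H" using T by blast
      qed
    qed
  qed
  have fq: "f T \<in> W // R" if "T \<in> verts H" for T
    unfolding f_def using r that by (auto intro: quotientI)
  have "adj H T1 T2 = adj (quotient_graph K R) (f T1) (f T2)"
    if T: "T1 \<in> verts H" "T2 \<in> verts H" for T1 T2
  proof -
    have "adj H T1 T2 = adj H (\<phi> (r T1)) (\<phi> (r T2))" using r T by simp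
    also have "\<dots> = (\<phi> (r T1) \<noteq> \<phi> (r T2) \<and> (\<exists>p' q'. (r T1, p') \<in> R \<and> (r T2, q') \<in> R \<and> adj K p' q'))"
      using phi_adj r T by blast
    also have "\<dots> = (f T1 \<noteq> f T2 \<and> (\<exists>p'\<in>f T1. \<exists>q'\<in>f T2. adj K p' q'))"
      using r T finj unfolding f_def by auto
    also have "\<dots> = adj (quotient_graph K R) (f T1) (f T2)"
      unfolding quotient_graph_def vK using fq T by auto
    finally show ?thesis .
  qed
  then show ?thesis unfolding graph_iso_def using bij by blast
qed

lemma fs_verts: "finite (verts H) \<Longrightarrow> forcing_set s H (verts H)"
  unfolding forcing_set_def by (simp add: reachable_blue.start)

lemma zf_ex: "finite (verts H) \<Longrightarrow> \<exists>S. forcing_set s H S \<and> card S = zf_number s H"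
proof -
  assume "finite (verts H)"
  then have "\<exists>S. forcing_set s H S \<and> card S = card (verts H)" using fs_verts by blast
  then show ?thesis unfolding zf_number_def
    using LeastI_ex[of "\<lambda>k. \<exists>S. forcing_set s H S \<and> card S = k"] by blast
qed

lemma zf_le: "forcing_set s H S \<Longrightarrow> zf_number s H \<le> card S"
  unfolding zf_number_def by (metis (mono_tags, lifting) Least_le)

context tw begin

lemma finGs: "finite (verts (twin s G v x))" using finG verts_Gs by simp

lemma fs_add: "forcing_set s G B \<Longrightarrow> forcing_set s (twin s G v x) (insert x B)"
  unfolding forcing_set_def using reach_add_x verts_Gs by auto

lemma fs_del: "s = Plus \<longrightarrow> \<not> isolated G v \<Longrightarrow> forcing_set s (twin s G v x) T \<Longrightarrow> x \<in> T \<Longrightarrow> forcing_set s G (T - {x})"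
  unfolding forcing_set_def using reach_del_x[of s T "verts (twin s G v x)"] verts_Gs xG
  by (auto simp: insert_Diff_if)

lemma fs_meet: "forcing_set s (twin s G v x) T \<Longrightarrow> v \<in> T \<or> x \<in> T"
  unfolding forcing_set_def using reach_meet[of s T "verts (twin s G v x)"] verts_Gs vG by auto

lemma sw_v: "sw v x v = x" and sw_x: "sw v x x = v" unfolding sw_def using vx by auto

lemma inj_sw: "inj (sw v x)" by (metis sw_sw injI)

lemma zf_Gs:
  assumes ok: "s = Plus \<longrightarrow> \<not> isolated G v"
  shows "zf_number s (twin s G v x) = Suc (zf_number s G)"
proof (rule antisym)
  obtain B where B: "forcing_set s G B" "card B = zf_number s G" using zf_ex finG by blast
  have "B \<subseteq> verts G" using B unfolding forcing_set_def by auto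
  then have "finite B" "x \<notin> B" using finG xG finite_subset by blast+
  then have "card (insert x B) = Suc (card B)" by simp
  then show "zf_number s (twin s G v x) \<le> Suc (zf_number s G)" using zf_le[OF fs_add[OF B(1)]] B by simp
next
  obtain T where T: "forcing_set s (twin s G v x) T" "card T = zf_number s (twin s G v x)"
    using zf_ex finGs by blast
  have "T \<subseteq> verts (twin s G v x)" using T unfolding forcing_set_def by auto
  then have fT: "finite T" using finite_subset finGs by blast
  obtain T' where T': "forcing_set s (twin s G v x) T'" "card T' = card T" "x \<in> T'"
  proof (cases "x \<in> T")
    case True then show ?thesis using that T by blast
  next
    case False
    then have "v \<in> T" using fs_meet T by blast
    have "card (sw v x ` T) = card T" by (rule card_image[OF inj_on_subset[OF inj_sw subset_UNIV]])
    moreover have "x \<in> sw v x ` T" using \<open>v \<in> T\<close> sw_v by (metis image_eqI)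
    ultimately show ?thesis using that[of "sw v x ` T"] forcing_sw[OF T(1)] by blast
  qed
  have "T' \<subseteq> verts (twin s G v x)" using T' unfolding forcing_set_def by auto
  then have fT': "finite T'" using finite_subset finGs by blast
  have "zf_number s G \<le> card (T' - {x})" using zf_le[OF fs_del[OF ok T'(1) T'(3)]] .
  also have "\<dots> = card T - 1" using T' fT' by simp
  finally have "zf_number s G \<le> card T - 1" .
  moreover have "card T' > 0" using fT' T'(3) card_gt_0_iff by blast
  then have "card T > 0" using T'(2) by simp
  ultimately show "Suc (zf_number s G) \<le> zf_number s (twin s G v x)" using T(2) by linarith
qed

lemma mfsG_sub: "B \<in> min_forcing_sets s G \<Longrightarrow> B \<subseteq> verts G \<and> x \<notin> B \<and> finite B"
proof -
  assume "B \<in> min_forcing_sets s G"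
  then have "B \<subseteq> verts G" unfolding min_forcing_sets_def forcing_set_def by auto
  then show ?thesis using xG finG finite_subset by blast
qed

lemma mfs_add:
  assumes ok: "s = Plus \<longrightarrow> \<not> isolated G v" and B: "B \<in> min_forcing_sets s G"
  shows "insert x B \<in> min_forcing_sets s (twin s G v x)"
    "sw v x ` insert x B \<in> min_forcing_sets s (twin s G v x)"
proof -
  have fs: "forcing_set s (twin s G v x) (insert x B)"
    using fs_add B unfolding min_forcing_sets_def by auto
  have c: "card (insert x B) = zf_number s (twin s G v x)"
    using zf_Gs[OF ok] B mfsG_sub[OF B] unfolding min_forcing_sets_def by auto
  show "insert x B \<in> min_forcing_sets s (twin s G v x)"
    using fs c unfolding min_forcing_sets_def by auto
  show "sw v x ` insert x B \<in> min_forcing_sets s (twin s G v x)"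
  proof -
    have "card (sw v x ` insert x B) = card (insert x B)"
      by (rule card_image[OF inj_on_subset[OF inj_sw subset_UNIV]])
    then show ?thesis using forcing_sw[OF fs] c unfolding min_forcing_sets_def by simp
  qed
qed

lemma mfs_cases:
  assumes ok: "s = Plus \<longrightarrow> \<not> isolated G v" and T: "T \<in> min_forcing_sets s (twin s G v x)"
  shows "\<exists>B \<in> min_forcing_sets s G. T = insert x B \<or> T = sw v x ` insert x B"
proof -
  have key: "T' - {x} \<in> min_forcing_sets s G \<and> T' = insert x (T' - {x})"
    if T': "T' \<in> min_forcing_sets s (twin s G v x)" "x \<in> T'" for T'
  proof -
    have fsT: "forcing_set s (twin s G v x) T'" and cT: "card T' = zf_number s (twin s G v x)"
      using T'(1) unfolding min_forcing_sets_def by auto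
    have fs: "forcing_set s G (T' - {x})" using fs_del[OF ok fsT T'(2)] .
    have "T' \<subseteq> verts (twin s G v x)" using fsT unfolding forcing_set_def by blast
    then have fT': "finite T'" using finite_subset finGs by blast
    have "card (T' - {x}) = card T' - 1" by (rule card_Diff_singleton[OF T'(2)])
    then have "card (T' - {x}) = zf_number s G" using cT zf_Gs[OF ok] by simp
    then have "T' - {x} \<in> min_forcing_sets s G" using fs unfolding min_forcing_sets_def by blast
    moreover have "T' = insert x (T' - {x})" using T'(2) by blast
    ultimately show ?thesis by blast
  qed
  show ?thesis
  proof (cases "x \<in> T")
    case True
    have k1: "T - {x} \<in> min_forcing_sets s G" using key[OF T True] by (rule conjunct1)
    have k2: "T = insert x (T - {x})" using key[OF T True] by (rule conjunct2)
    show ?thesis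
    proof (rule bexI[of _ "T - {x}"])
      show "T = insert x (T - {x}) \<or> T = sw v x ` insert x (T - {x})" using k2 by (rule disjI1)
      show "T - {x} \<in> min_forcing_sets s G" by (rule k1)
    qed
  next
    case False
    have fsT: "forcing_set s (twin s G v x) T" and cT: "card T = zf_number s (twin s G v x)"
      using T unfolding min_forcing_sets_def by auto
    have "v \<in> T" using fs_meet[OF fsT] False by blast
    have "card (sw v x ` T) = card T"
      by (rule card_image[OF inj_on_subset[OF inj_sw subset_UNIV]])
    then have T2: "sw v x ` T \<in> min_forcing_sets s (twin s G v x)"
      using forcing_sw[OF fsT] cT unfolding min_forcing_sets_def by simp
    have "x \<in> sw v x ` T" using \<open>v \<in> T\<close> sw_v by (metis image_eqI)
    have m: "sw v x ` T - {x} \<in> min_forcing_sets s G" using key[OF T2 \<open>x \<in> sw v x ` T\<close>] by (rule conjunct1)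
    have e: "sw v x ` T = insert x (sw v x ` T - {x})" using key[OF T2 \<open>x \<in> sw v x ` T\<close>] by (rule conjunct2)
    have img: "sw v x ` (sw v x ` T) = T" by (simp add: image_image sw_sw)
    have h: "sw v x ` (sw v x ` T) = sw v x ` insert x (sw v x ` T - {x})" by (rule arg_cong[OF e])
    have hh: "T = sw v x ` insert x (sw v x ` T - {x})" using h img by metis
    show ?thesis
    proof (rule bexI[of _ "sw v x ` T - {x}"])
      show "T = insert x (sw v x ` T - {x}) \<or> T = sw v x ` insert x (sw v x ` T - {x})" using hh by (rule disjI2)
      show "sw v x ` T - {x} \<in> min_forcing_sets s G" by (rule m)
    qed
  qed
qed

lemma sw_img: assumes xB: "x \<notin> B" shows "sw v x ` insert x B = (if v \<in> B then insert x B else insert v B)"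
proof -
  have 1: "sw v x ` insert x B = insert v (sw v x ` B)" by (simp add: sw_x)
  have 2: "sw v x ` B = (\<lambda>b. if b = v then x else b) ` B"
  proof (rule image_cong)
    fix b assume "b \<in> B" then have "b \<noteq> x" using xB by blast
    then show "sw v x b = (if b = v then x else b)" unfolding sw_def by simp
  qed simp
  show ?thesis
  proof (cases "v \<in> B")
    case True
    have "(\<lambda>b. if b = v then x else b) ` B = insert x (B - {v})" using True by (auto simp: image_iff)
    then show ?thesis using 1 2 True by auto
  next
    case False
    have "(\<lambda>b. if b = v then x else b) ` B = B" using False by (auto simp: image_iff)
    then show ?thesis using 1 2 False by auto
  qed
qed

end

definition exch :: "('a \<Rightarrow> 'a \<Rightarrow> bool) \<Rightarrow> 'a set \<Rightarrow> 'a set \<Rightarrow> bool" where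
  "exch P S1 S2 = (\<exists>v1 v2. S1 - S2 = {v1} \<and> S2 - S1 = {v2} \<and> P v1 v2)"

lemma inj_img_single: "inj h \<Longrightarrow> (h ` C = {c}) = (\<exists>a. C = {a} \<and> h a = c)"
proof
  assume i: "inj h" and e: "h ` C = {c}"
  then obtain a where a: "a \<in> C" "h a = c" by (metis imageE insertI1)
  have "\<And>b. b \<in> C \<Longrightarrow> b = a" using e a i by (metis imageI inj_eq singletonD)
  then show "\<exists>a. C = {a} \<and> h a = c" using a by blast
qed auto

lemma exch_img:
  assumes i: "inj h" and P: "\<And>a b. P (h a) (h b) = P a b"
  shows "exch P (h ` A) (h ` B) = exch P A B"
proof -
  have d: "h ` A - h ` B = h ` (A - B)" "h ` B - h ` A = h ` (B - A)"
    using i by (simp_all add: image_set_diff)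
  show ?thesis
  proof
    assume "exch P (h ` A) (h ` B)"
    then obtain v1 v2 where e: "h ` (A - B) = {v1}" "h ` (B - A) = {v2}" "P v1 v2"
      unfolding exch_def d by blast
    then obtain a b where "A - B = {a}" "h a = v1" "B - A = {b}" "h b = v2"
      using inj_img_single[OF i] by metis
    then show "exch P A B" unfolding exch_def using e P by blast
  next
    assume "exch P A B"
    then obtain a b where e: "A - B = {a}" "B - A = {b}" "P a b" unfolding exch_def by blast
    then have "h ` A - h ` B = {h a}" "h ` B - h ` A = {h b}" "P (h a) (h b)" using d P by auto
    then show "exch P (h ` A) (h ` B)" unfolding exch_def by blast
  qed
qed

lemma exch_ins:
  assumes "x \<notin> A" "x \<notin> B" and P: "\<And>a b. a \<noteq> x \<Longrightarrow> b \<noteq> x \<Longrightarrow> P' a b = P a b"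
  shows "exch P' (insert x A) (insert x B) = exch P A B"
proof -
  have d: "insert x A - insert x B = A - B" "insert x B - insert x A = B - A" using assms by auto
  have "A - B = {a} \<Longrightarrow> a \<noteq> x" for a using assms by auto
  moreover have "B - A = {a} \<Longrightarrow> a \<noteq> x" for a using assms by auto
  ultimately show ?thesis unfolding exch_def d using P by metis
qed

lemma exch_sym: "exch P A B = exch (\<lambda>a b. P b a) B A" unfolding exch_def by blast

lemma exch_xv:
  assumes "x \<noteq> v" "v \<notin> B1" "v \<notin> B2" "x \<notin> B1" "x \<notin> B2"
    and e: "exch P (insert x B1) (insert v B2)"
  shows "B1 = B2 \<and> P x v"
proof -
  obtain v1 v2 where d: "insert x B1 - insert v B2 = {v1}" "insert v B2 - insert x B1 = {v2}" "P v1 v2"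
    using e unfolding exch_def by blast
  have "x \<in> insert x B1 - insert v B2" using assms by auto
  then have 1: "v1 = x" using d by auto
  have "v \<in> insert v B2 - insert x B1" using assms by auto
  then have 2: "v2 = v" using d by auto
  have "B1 \<subseteq> B2"
  proof
    fix b assume "b \<in> B1"
    show "b \<in> B2"
    proof (rule ccontr)
      assume "b \<notin> B2"
      then have "b \<in> insert x B1 - insert v B2" using \<open>b \<in> B1\<close> assms by auto
      then show False using d 1 assms \<open>b \<in> B1\<close> by auto
    qed
  qed
  moreover have "B2 \<subseteq> B1"
  proof
    fix b assume "b \<in> B2"
    show "b \<in> B1"
    proof (rule ccontr)
      assume "b \<notin> B1"
      then have "b \<in> insert v B2 - insert x B1" using \<open>b \<in> B2\<close> assms by auto
      then show False using d 2 assms \<open>b \<in> B2\<close> by auto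
    qed
  qed
  ultimately show ?thesis using d 1 2 by auto
qed

lemma exch_xv_intro:
  assumes "x \<noteq> v" "v \<notin> B" "x \<notin> B" "P x v"
  shows "exch P (insert x B) (insert v B)"
proof -
  have "insert x B - insert v B = {x}" "insert v B - insert x B = {v}" using assms by auto
  then show ?thesis unfolding exch_def using assms by blast
qed

lemma exch_neq: "exch P A B \<Longrightarrow> A \<noteq> B" unfolding exch_def by auto

context tw begin

definition phi :: "'a set \<times> 'a \<Rightarrow> 'a set" where
  "phi p = (if snd p = v \<or> v \<in> fst p then insert x (fst p) else insert v (fst p))"

lemma phi_v: "phi (B, v) = insert x B" unfolding phi_def by simp
lemma phi_x: "x \<notin> B \<Longrightarrow> phi (B, x) = sw v x ` insert x B" unfolding phi_def using sw_img vx by auto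

lemma same_a:
  assumes hP1: "\<And>a b. Pst (sw v x a) (sw v x b) = Pst a b"
    and hP2: "\<And>a b. a \<noteq> x \<Longrightarrow> b \<noteq> x \<Longrightarrow> Pst a b = PG a b"
    and a: "a \<in> {v, x}" and B: "x \<notin> B1" "x \<notin> B2"
  shows "exch Pst (phi (B1, a)) (phi (B2, a)) = exch PG B1 B2"
proof (cases "a = v")
  case True then show ?thesis using exch_ins[of x B1 B2 Pst PG, OF B hP2] phi_v by simp
next
  case False then have "a = x" using a by auto
  have "exch Pst (phi (B1, a)) (phi (B2, a)) = exch Pst (sw v x ` insert x B1) (sw v x ` insert x B2)"
    using phi_x B \<open>a = x\<close> by simp
  also have "\<dots> = exch Pst (insert x B1) (insert x B2)"
    by (rule exch_img[of "sw v x" Pst, OF inj_sw hP1])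
  also have "\<dots> = exch PG B1 B2" by (rule exch_ins[OF B hP2])
  finally show ?thesis .
qed

lemma main_iso:
  assumes ok: "s = Plus \<longrightarrow> \<not> isolated G v"
    and hP1: "\<And>a b. Pst (sw v x a) (sw v x b) = Pst a b"
    and hP2: "\<And>a b. a \<noteq> x \<Longrightarrow> b \<noteq> x \<Longrightarrow> Pst a b = PG a b"
    and hPs: "Pst x v = Pst v x"
    and vK: "verts K = min_forcing_sets s G \<times> {v, x}"
    and aK: "\<And>p q. p \<in> verts K \<Longrightarrow> q \<in> verts K \<Longrightarrow> adj K p q =
        ((snd p = snd q \<and> exch PG (fst p) (fst q)) \<or> (Pst x v \<and> fst p = fst q \<and> snd p \<noteq> snd q))"
    and vH: "verts H = min_forcing_sets s (twin s G v x)"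
    and aH: "\<And>S1 S2. S1 \<in> verts H \<Longrightarrow> S2 \<in> verts H \<Longrightarrow> adj H S1 S2 = exch Pst S1 S2"
  shows "H \<cong>\<^sub>g quotient_graph K (ident_rel (verts K) v)"
proof -
  let ?W = "min_forcing_sets s G \<times> {v, x}"
  let ?R = "ident_rel (verts K) v"
  have Rdef: "(p, q) \<in> ?R \<longleftrightarrow> p \<in> ?W \<and> q \<in> ?W \<and> (p = q \<or> (fst p = fst q \<and> v \<in> fst p))" for p q
    unfolding ident_rel_def vK by auto
  have eq: "equiv ?W ?R"
    unfolding equiv_def refl_on_def sym_def trans_def using Rdef by (auto simp: vK ident_rel_def)
  have inW: "B \<in> min_forcing_sets s G \<Longrightarrow> x \<notin> B \<and> v \<notin> B \<longrightarrow> True" for B by simp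
  have phi_into: "phi ` ?W = verts H"
  proof
    show "phi ` ?W \<subseteq> verts H"
    proof
      fix T assume "T \<in> phi ` ?W"
      then obtain B a where B: "B \<in> min_forcing_sets s G" "a \<in> {v, x}" "T = phi (B, a)" by auto
      have "x \<notin> B" using mfsG_sub[OF B(1)] by blast
      then show "T \<in> verts H" using B mfs_add[OF ok B(1)] phi_v phi_x vH by auto
    qed
  next
    show "verts H \<subseteq> phi ` ?W"
    proof
      fix T assume "T \<in> verts H"
      then obtain B where B: "B \<in> min_forcing_sets s G" "T = insert x B \<or> T = sw v x ` insert x B"
        using mfs_cases[OF ok] vH by blast
      have "x \<notin> B" using mfsG_sub[OF B(1)] by blast
      then have "T = phi (B, v) \<or> T = phi (B, x)" using B phi_v phi_x by auto
      then show "T \<in> phi ` ?W" using B(1) by blast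
    qed
  qed
  have phi_eq: "(phi p = phi q) = ((p, q) \<in> ?R)" if p: "p \<in> ?W" and q: "q \<in> ?W" for p q
  proof -
    obtain B1 a1 B2 a2 where pq: "p = (B1, a1)" "q = (B2, a2)" by (cases p, cases q) auto
    have x1: "x \<notin> B1" and x2: "x \<notin> B2" using mfsG_sub p q pq by auto
    have a: "a1 \<in> {v, x}" "a2 \<in> {v, x}" using p q pq by auto
    show ?thesis unfolding Rdef pq using x1 x2 a p q pq vx unfolding phi_def
      by (auto simp: insert_ident)
  qed
  have phi_adj: "exch Pst (phi p) (phi q) = (phi p \<noteq> phi q \<and> (\<exists>p' q'. (p, p') \<in> ?R \<and> (q, q') \<in> ?R \<and> adj K p' q'))"
    if p: "p \<in> ?W" and q: "q \<in> ?W" for p q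
  proof -
    obtain B1 a1 B2 a2 where pq: "p = (B1, a1)" "q = (B2, a2)" by (cases p, cases q) auto
    have x1: "x \<notin> B1" and x2: "x \<notin> B2" using mfsG_sub p q pq by auto
    have a: "a1 \<in> {v, x}" "a2 \<in> {v, x}" using p q pq by auto
    have m: "B1 \<in> min_forcing_sets s G" "B2 \<in> min_forcing_sets s G" using p q pq by auto
    have Rp: "(p, p) \<in> ?R" "(q, q) \<in> ?R" using Rdef p q by auto
    have vKW: "verts K = ?W" by (rule vK)
    have phiv: "phi (B, a) = (if a = v then insert x B else insert v B)" if "v \<notin> B" for B a
      using that unfolding phi_def by auto
    show ?thesis
    proof
      assume ex: "exch Pst (phi p) (phi q)"
      have neq: "phi p \<noteq> phi q" using exch_neq[OF ex] .
      have "\<exists>p' q'. (p, p') \<in> ?R \<and> (q, q') \<in> ?R \<and> adj K p' q'"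
      proof (cases "a1 = a2")
        case True
        have "exch PG B1 B2" using same_a[of Pst PG, OF hP1 hP2 a(1) x1 x2] ex pq True by simp
        then have "adj K p q" using aK[of p q] p q vK pq True by simp
        then show ?thesis using Rp by blast
      next
        case False
        show ?thesis
        proof (cases "v \<in> B1")
          case True
          let ?p' = "(B1, a2)"
          have R1: "(p, ?p') \<in> ?R" using Rdef p pq m a True by auto
          have "phi ?p' = phi p" using phi_eq[of p ?p'] R1 Rdef by auto
          then have "exch PG B1 B2" using same_a[of Pst PG, OF hP1 hP2 a(2) x1 x2] ex pq by simp
          then have "adj K ?p' q" using aK[of ?p' q] m a q vK pq by simp
          then show ?thesis using Rp R1 by blast
        next
          case nB1: False
          show ?thesis
          proof (cases "v \<in> B2")
            case True
            let ?q' = "(B2, a1)"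
            have R1: "(q, ?q') \<in> ?R" using Rdef q pq m a True by auto
            have "phi ?q' = phi q" using phi_eq[of q ?q'] R1 Rdef by auto
            then have "exch PG B1 B2" using same_a[of Pst PG, OF hP1 hP2 a(1) x1 x2] ex pq by simp
            then have "adj K p ?q'" using aK[of p ?q'] m a p vK pq by simp
            then show ?thesis using Rp R1 by blast
          next
            case nB2: False
            have "B1 = B2 \<and> Pst x v"
            proof (cases "a1 = v")
              case True
              then have "a2 = x" using False a by auto
              then have "exch Pst (insert x B1) (insert v B2)"
                using ex pq phiv nB1 nB2 True vx by auto
              then show ?thesis using exch_xv[OF vx[symmetric] nB1 nB2 x1 x2] by blast
            next
              case F2: False
              then have "a1 = x" "a2 = v" using False a by auto
              then have "exch Pst (insert v B1) (insert x B2)"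
                using ex pq phiv nB1 nB2 vx by auto
              then have "exch (\<lambda>a b. Pst b a) (insert x B2) (insert v B1)" using exch_sym by metis
              then show ?thesis using exch_xv[OF vx[symmetric] nB2 nB1 x2 x1] hPs by auto
            qed
            then have "adj K p q" using aK[of p q] p q vK pq False by simp
            then show ?thesis using Rp by blast
          qed
        qed
      qed
      then show "phi p \<noteq> phi q \<and> (\<exists>p' q'. (p, p') \<in> ?R \<and> (q, q') \<in> ?R \<and> adj K p' q')"
        using neq by blast
    next
      assume "phi p \<noteq> phi q \<and> (\<exists>p' q'. (p, p') \<in> ?R \<and> (q, q') \<in> ?R \<and> adj K p' q')"
      then obtain p' q' where neq: "phi p \<noteq> phi q" and R: "(p, p') \<in> ?R" "(q, q') \<in> ?R"
        and adjK: "adj K p' q'" by blast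
      have W': "p' \<in> ?W" "q' \<in> ?W" using R Rdef by auto
      have e1: "phi p' = phi p" "phi q' = phi q"
        using phi_eq[OF p W'(1)] phi_eq[OF q W'(2)] R by auto
      obtain C1 b1 C2 b2 where pq': "p' = (C1, b1)" "q' = (C2, b2)" by (cases p', cases q') auto
      have y1: "x \<notin> C1" and y2: "x \<notin> C2" using mfsG_sub W' pq' by auto
      have b: "b1 \<in> {v, x}" "b2 \<in> {v, x}" using W' pq' by auto
      have "exch Pst (phi p') (phi q')"
      proof -
        have "(b1 = b2 \<and> exch PG C1 C2) \<or> (Pst x v \<and> C1 = C2 \<and> b1 \<noteq> b2)"
          using aK[of p' q'] W' vK adjK pq' by simp
        then show ?thesis
        proof
          assume "b1 = b2 \<and> exch PG C1 C2"
          then show ?thesis using same_a[of Pst PG, OF hP1 hP2 b(1) y1 y2] pq' by simp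
        next
          assume c: "Pst x v \<and> C1 = C2 \<and> b1 \<noteq> b2"
          have "v \<notin> C1"
          proof
            assume "v \<in> C1"
            then have "(p', q') \<in> ?R" using Rdef W' pq' c by auto
            then have "phi p' = phi q'" using phi_eq W' by auto
            then show False using e1 neq by simp
          qed
          show ?thesis
          proof (cases "b1 = v")
            case True
            then have "b2 = x" using c b by auto
            have "exch Pst (insert x C1) (insert v C1)"
              by (rule exch_xv_intro[OF vx[symmetric] \<open>v \<notin> C1\<close> y1]) (use c in blast)
            then show ?thesis using pq' phiv[OF \<open>v \<notin> C1\<close>] True \<open>b2 = x\<close> c vx by auto
          next
            case False
            then have "b1 = x" "b2 = v" using c b by auto
            have "exch (\<lambda>a b. Pst b a) (insert x C1) (insert v C1)"
              by (rule exch_xv_intro[OF vx[symmetric] \<open>v \<notin> C1\<close> y1]) (use c hPs in auto)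
            then have "exch Pst (insert v C1) (insert x C1)" using exch_sym by metis
            then show ?thesis using pq' phiv[OF \<open>v \<notin> C1\<close>] \<open>b1 = x\<close> \<open>b2 = v\<close> c vx by auto
          qed
        qed
      qed
      then show "exch Pst (phi p) (phi q)" using e1 by simp
    qed
  qed
  have "H \<cong>\<^sub>g quotient_graph K ?R"
  proof (rule quot_iso[OF eq vK phi_into phi_eq])
    fix p q assume "p \<in> ?W" "q \<in> ?W"
    then have "phi p \<in> verts H" "phi q \<in> verts H" using phi_into by auto
    then show "adj H (phi p) (phi q) =
        (phi p \<noteq> phi q \<and> (\<exists>p' q'. (p, p') \<in> ?R \<and> (q, q') \<in> ?R \<and> adj K p' q'))"
      using aH phi_adj \<open>p \<in> ?W\<close> \<open>q \<in> ?W\<close> by simp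
  qed (auto)
  then show ?thesis .
qed

end

context tw begin

lemma exch_true: "exch (\<lambda>_ _. True) S1 S2 = (\<exists>v1 v2. S1 - S2 = {v1} \<and> S2 - S1 = {v2})"
  unfolding exch_def by simp

lemma iso_ZTE:
  assumes ok: "s = Plus \<longrightarrow> \<not> isolated G v"
  shows "ZTE s (twin s G v x) \<cong>\<^sub>g quotient_graph (cart_prod (ZTE s G) (P2 v x))
                   (ident_rel (verts (cart_prod (ZTE s G) (P2 v x))) v)"
proof (rule main_iso[OF ok, of "\<lambda>_ _. True" "\<lambda>_ _. True"])
  show "verts (cart_prod (ZTE s G) (P2 v x)) = min_forcing_sets s G \<times> {v, x}"
    unfolding cart_prod_def ZTE_def P2_def by simp
  show "verts (ZTE s (twin s G v x)) = min_forcing_sets s (twin s G v x)"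
    unfolding ZTE_def by simp
  fix p q
  assume "p \<in> verts (cart_prod (ZTE s G) (P2 v x))" "q \<in> verts (cart_prod (ZTE s G) (P2 v x))"
  then show "adj (cart_prod (ZTE s G) (P2 v x)) p q =
     (snd p = snd q \<and> exch (\<lambda>_ _. True) (fst p) (fst q) \<or> True \<and> fst p = fst q \<and> snd p \<noteq> snd q)"
    unfolding cart_prod_def ZTE_def P2_def exch_true using vx
    by (cases p, cases q) auto
qed (auto simp: ZTE_def exch_true)

lemma iso_ZTS_plus:
  assumes ok: "\<not> isolated G v"
  shows "ZTS Plus (twin Plus G v x) \<cong>\<^sub>g quotient_graph (cart_prod (ZTS Plus G) (P2 v x))
                   (ident_rel (verts (cart_prod (ZTS Plus G) (P2 v x))) v)"
proof (rule main_iso[of Plus "adj (twin Plus G v x)" "adj G"])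
  show "Plus = Plus \<longrightarrow> \<not> isolated G v" using ok by simp
  show "\<And>a b. adj (twin Plus G v x) (sw v x a) (sw v x b) = adj (twin Plus G v x) a b" by (rule adj_Gs_sw)
  show "\<And>a b. a \<noteq> x \<Longrightarrow> b \<noteq> x \<Longrightarrow> adj (twin Plus G v x) a b = adj G a b" by (rule adj_Gs_nx)
  show "adj (twin Plus G v x) x v = adj (twin Plus G v x) v x" by (rule adj_Gs_sym)
  show "verts (cart_prod (ZTS Plus G) (P2 v x)) = min_forcing_sets Plus G \<times> {v, x}"
    unfolding cart_prod_def ZTS_def P2_def by simp
  show "verts (ZTS Plus (twin Plus G v x)) = min_forcing_sets Plus (twin Plus G v x)"
    unfolding ZTS_def by simp
  have xv: "adj (twin Plus G v x) x v" by (simp add: adj_Gs_x1)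
  fix p q
  assume "p \<in> verts (cart_prod (ZTS Plus G) (P2 v x))" "q \<in> verts (cart_prod (ZTS Plus G) (P2 v x))"
  then show "adj (cart_prod (ZTS Plus G) (P2 v x)) p q =
     (snd p = snd q \<and> exch (adj G) (fst p) (fst q) \<or> adj (twin Plus G v x) x v \<and> fst p = fst q \<and> snd p \<noteq> snd q)"
    unfolding cart_prod_def ZTS_def P2_def exch_def using vx xv
    by (cases p, cases q) auto
qed (auto simp: ZTS_def exch_def)

lemma iso_ZTS_minus:
  shows "ZTS Minus (twin Minus G v x) \<cong>\<^sub>g quotient_graph (two_copies (ZTS Minus G) v x)
                   (ident_rel (verts (two_copies (ZTS Minus G) v x)) v)"
proof (rule main_iso[of Minus "adj (twin Minus G v x)" "adj G"])
  show "Minus = Plus \<longrightarrow> \<not> isolated G v" by simp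
  show "\<And>a b. adj (twin Minus G v x) (sw v x a) (sw v x b) = adj (twin Minus G v x) a b" by (rule adj_Gs_sw)
  show "\<And>a b. a \<noteq> x \<Longrightarrow> b \<noteq> x \<Longrightarrow> adj (twin Minus G v x) a b = adj G a b" by (rule adj_Gs_nx)
  show "adj (twin Minus G v x) x v = adj (twin Minus G v x) v x" by (rule adj_Gs_sym)
  show "verts (two_copies (ZTS Minus G) v x) = min_forcing_sets Minus G \<times> {v, x}"
    unfolding two_copies_def ZTS_def by simp
  show "verts (ZTS Minus (twin Minus G v x)) = min_forcing_sets Minus (twin Minus G v x)"
    unfolding ZTS_def by simp
  have xv: "\<not> adj (twin Minus G v x) x v" using adj_Gs_x1 adjG by auto
  fix p q
  assume "p \<in> verts (two_copies (ZTS Minus G) v x)" "q \<in> verts (two_copies (ZTS Minus G) v x)"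
  then show "adj (two_copies (ZTS Minus G) v x) p q =
     (snd p = snd q \<and> exch (adj G) (fst p) (fst q) \<or> adj (twin Minus G v x) x v \<and> fst p = fst q \<and> snd p \<noteq> snd q)"
    unfolding two_copies_def ZTS_def exch_def using vx xv
    by (cases p, cases q) auto
qed (auto simp: ZTS_def exch_def)

end

theorem theorem6p14:
  fixes G :: "'a graph" and v x :: 'a
  assumes "simple_graph G" and "v \<in> verts G" and "x \<notin> verts G"
  shows "(\<forall>s. (s = Plus \<longrightarrow> \<not> isolated G v) \<longrightarrow>
            ZTE s (case s of Plus \<Rightarrow> add_twin_plus G v x | Minus \<Rightarrow> add_twin_minus G v x)
            \<cong>\<^sub>g quotient_graph (cart_prod (ZTE s G) (P2 v x))
                   (ident_rel (verts (cart_prod (ZTE s G) (P2 v x))) v))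
       \<and> (\<not> isolated G v \<longrightarrow>
            ZTS Plus (add_twin_plus G v x)
            \<cong>\<^sub>g quotient_graph (cart_prod (ZTS Plus G) (P2 v x))
                   (ident_rel (verts (cart_prod (ZTS Plus G) (P2 v x))) v))
       \<and> ZTS Minus (add_twin_minus G v x)
            \<cong>\<^sub>g quotient_graph (two_copies (ZTS Minus G) v x)
                   (ident_rel (verts (two_copies (ZTS Minus G) v x)) v)"
proof -
  interpret tw G v x using assms by unfold_locales
  have 1: "\<forall>s. (s = Plus \<longrightarrow> \<not> isolated G v) \<longrightarrow>
            ZTE s (case s of Plus \<Rightarrow> add_twin_plus G v x | Minus \<Rightarrow> add_twin_minus G v x)
            \<cong>\<^sub>g quotient_graph (cart_prod (ZTE s G) (P2 v x))
                   (ident_rel (verts (cart_prod (ZTE s G) (P2 v x))) v)"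
    using iso_ZTE unfolding twin_def by blast
  have 2: "\<not> isolated G v \<longrightarrow>
            ZTS Plus (add_twin_plus G v x)
            \<cong>\<^sub>g quotient_graph (cart_prod (ZTS Plus G) (P2 v x))
                   (ident_rel (verts (cart_prod (ZTS Plus G) (P2 v x))) v)"
    using iso_ZTS_plus unfolding twin_def by simp
  have 3: "ZTS Minus (add_twin_minus G v x)
            \<cong>\<^sub>g quotient_graph (two_copies (ZTS Minus G) v x)
                   (ident_rel (verts (two_copies (ZTS Minus G) v x)) v)"
    using iso_ZTS_minus unfolding twin_def by simp
  show ?thesis using 1 2 3 by blast
qed

end
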